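(* Let $G$ be an Abelian group, $B=\{b_0,\dots,b_{q-1}\}\subseteq G$ a $B_h$ set of cardinality $q$, $b\in G$, and $n\ge1$. Then the code $$\mathcal C_n^{(G,B,b)}=\Big\{\mathbf x\in\triangle_n^{q-1}:\sum_{i=0}^{q-1}x_ib_i=b\Big\}$$ can correct $h$ deletions; in particular, if it has at least two elements then $d_1(\mathcal C_n^{(G,B,b)})>h$.
   Context: $\triangle_n^{q-1}=\{\mathbf x\in\mathbb Z^q:x_i\ge0,\sum_{i=0}^{q-1}x_i=n\}$, identified with multisets of cardinality $n$ over $[q]=\{0,\dots,q-1\}$ ($x_i$ = multiplicity of symbol $i$). $d_1(\mathbf x,\mathbf y)=\frac12\sum_i|x_i-y_i|$, $d_1(\mathcal C)$ its minimum over distinct codewords. A deletion removes one element of the multiset; a code can correct $h$ deletions if no two distinct codewords yield the same output after arbitrary patterns of at most $h$ deletions. $x_ib_i$ is the $x_i$-fold sum of $b_i$ in $G$. A set $\{b_0,\dots,b_{q-1}\}$ in an Abelian group is a $B_h$ set if the sums $b_{i_1}+\dots+b_{i_h}$, $0\le i_1\le\dots\le i_h\le q-1$, are pairwise different. *)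

theory Defs
  imports Complex_Main "HOL-Library.Multiset"
begin

text \<open>Words of the multiset channel: multisets over the alphabet [q] = {0,...,q-1};
  the vector x in the simplex is given by x_i = count M i.\<close>

definition simplex :: "nat \<Rightarrow> nat \<Rightarrow> nat multiset set" where
  "simplex q n = {M. set_mset M \<subseteq> {..<q} \<and> size M = n}"

definition nsum :: "nat \<Rightarrow> 'a::ab_group_add \<Rightarrow> 'a" where
  "nsum k g = (\<Sum>_\<in>{..<k}. g)"

text \<open>B_h set: sums of h (not necessarily distinct) elements b_{i_1}+...+b_{i_h},
  i_1 \<le> ... \<le> i_h, i.e. indexed by multisets of size h over [q], are pairwise different.\<close>
definition Bh_set :: "nat \<Rightarrow> nat \<Rightarrow> (nat \<Rightarrow> 'a::ab_group_add) \<Rightarrow> bool" where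
  "Bh_set h q b \<longleftrightarrow>
     (\<forall>I J. set_mset I \<subseteq> {..<q} \<and> size I = h \<and> set_mset J \<subseteq> {..<q} \<and> size J = h \<and> I \<noteq> J
        \<longrightarrow> sum_mset (image_mset b I) \<noteq> sum_mset (image_mset b J))"

definition code :: "nat \<Rightarrow> nat \<Rightarrow> (nat \<Rightarrow> 'a::ab_group_add) \<Rightarrow> 'a \<Rightarrow> nat multiset set" where
  "code q n b c = {M \<in> simplex q n. (\<Sum>i<q. nsum (count M i) (b i)) = c}"

definition del_outputs :: "nat \<Rightarrow> 'b multiset \<Rightarrow> 'b multiset set" where
  "del_outputs h M = {N. N \<subseteq># M \<and> size M - size N \<le> h}"

definition corrects_deletions :: "nat \<Rightarrow> 'b multiset set \<Rightarrow> bool" where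
  "corrects_deletions h C \<longleftrightarrow>
     (\<forall>x\<in>C. \<forall>y\<in>C. x \<noteq> y \<longrightarrow> del_outputs h x \<inter> del_outputs h y = {})"

definition d1 :: "nat \<Rightarrow> nat multiset \<Rightarrow> nat multiset \<Rightarrow> real" where
  "d1 q x y = (1/2) * (\<Sum>i<q. \<bar>real (count x i) - real (count y i)\<bar>)"

definition d1_code :: "nat \<Rightarrow> nat multiset set \<Rightarrow> real" where
  "d1_code q C = Min {d1 q x y | x y. x \<in> C \<and> y \<in> C \<and> x \<noteq> y}"

end

theory Submission
  imports Defs
begin

lemma nsum_add: "nsum (m + k) g = nsum m g + nsum k g"
  by (induction k) (simp_all add: nsum_def lessThan_Suc add.assoc add.commute add.left_commute)

definition F :: "nat \<Rightarrow> (nat \<Rightarrow> 'a::ab_group_add) \<Rightarrow> nat multiset \<Rightarrow> 'a" where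
  "F q b M = (\<Sum>i<q. nsum (count M i) (b i))"

lemma F_eq: "set_mset M \<subseteq> {..<q} \<Longrightarrow> F q b M = sum_mset (image_mset b M)"
proof (induction M)
  case empty
  then show ?case by (simp add: F_def nsum_def)
next
  case (add a M)
  have aq: "a < q" using add.prems by auto
  have "F q b (add_mset a M) = (\<Sum>i<q. nsum (count M i) (b i) + nsum (if i = a then 1 else 0) (b i))"
    unfolding F_def by (rule sum.cong) (auto simp: nsum_add[symmetric])
  also have "\<dots> = F q b M + (\<Sum>i<q. nsum (if i = a then 1 else 0) (b i))"
    by (simp add: F_def sum.distrib)
  also have "(\<Sum>i<q. nsum (if i = a then 1 else 0) (b i)) = (\<Sum>i<q. if i = a then b i else 0)"
    by (rule sum.cong) (auto simp: nsum_def)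
  also have "\<dots> = b a" using aq by simp
  finally show ?case using add by (simp add: add.commute)
qed

lemma size_count: "set_mset (M::nat multiset) \<subseteq> {..<q} \<Longrightarrow> size M = (\<Sum>i<q. count M i)"
proof (induction M)
  case empty
  then show ?case by simp
next
  case (add a M)
  have aq: "a < q" using add.prems by auto
  have "(\<Sum>i<q. count (add_mset a M) i) = (\<Sum>i<q. count M i + (if i = a then 1 else 0))"
    by (rule sum.cong) auto
  also have "\<dots> = (\<Sum>i<q. count M i) + (\<Sum>i<q. (if i = a then 1 else 0::nat))"
    by (simp only: sum.distrib)
  also have "(\<Sum>i<q. (if i = a then 1 else 0::nat)) = 1"
    using aq by (subst sum.delta) auto
  finally show ?case using add by simp
qed

lemma part1:
  assumes bh: "Bh_set h q b"
  shows "corrects_deletions h (code q n b c)"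
  unfolding corrects_deletions_def
proof (intro ballI impI)
  fix x y assume x: "x \<in> code q n b c" and y: "y \<in> code q n b c" and xy: "x \<noteq> y"
  show "del_outputs h x \<inter> del_outputs h y = {}"
  proof (rule ccontr)
    assume "del_outputs h x \<inter> del_outputs h y \<noteq> {}"
    then obtain N where Nx: "N \<subseteq># x" and Ny: "N \<subseteq># y" and sx: "size x - size N \<le> h"
      unfolding del_outputs_def by auto
    have xs: "set_mset x \<subseteq> {..<q}" "size x = n" "F q b x = c"
      using x by (auto simp: code_def simplex_def F_def)
    have ys: "set_mset y \<subseteq> {..<q}" "size y = n" "F q b y = c"
      using y by (auto simp: code_def simplex_def F_def)
    define X where "X = x - N"
    define Y where "Y = y - N"
    have xN: "x = N + X" using Nx unfolding X_def by (simp add: subset_mset.add_diff_inverse)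
    have yN: "y = N + Y" using Ny unfolding Y_def by (simp add: subset_mset.add_diff_inverse)
    have XY: "X \<noteq> Y" using xN yN xy by auto
    have szX: "size X = size x - size N" using xN by simp
    have szY: "size Y = size X" using xN yN xs ys by simp
    have sN: "set_mset N \<subseteq> {..<q}" "set_mset X \<subseteq> {..<q}" "set_mset Y \<subseteq> {..<q}"
      using xs ys xN yN by auto
    have "sum_mset (image_mset b x) = sum_mset (image_mset b y)"
      using F_eq[OF xs(1), of b] F_eq[OF ys(1), of b] xs ys by simp
    hence sXY: "sum_mset (image_mset b X) = sum_mset (image_mset b Y)"
      using xN yN by simp
    have "x \<noteq> {#}"
    proof
      assume "x = {#}"
      hence "size y = 0" using xs ys by simp
      hence "y = {#}" by simp
      thus False using \<open>x = {#}\<close> xy by simp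
    qed
    then obtain a where "a \<in># x" by blast
    hence aq: "a < q" using xs by auto
    define P where "P = replicate_mset (h - size X) a"
    have "sum_mset (image_mset b (X + P)) \<noteq> sum_mset (image_mset b (Y + P))"
    proof -
      have "set_mset (X + P) \<subseteq> {..<q}" "set_mset (Y + P) \<subseteq> {..<q}"
        using sN aq by (auto simp: P_def)
      moreover have "size (X + P) = h" "size (Y + P) = h"
        using szX szY sx by (auto simp: P_def)
      moreover have "X + P \<noteq> Y + P" using XY by simp
      ultimately show ?thesis using bh unfolding Bh_set_def by blast
    qed
    thus False using sXY by simp
  qed
qed

lemma d1_eq:
  assumes "set_mset x \<subseteq> {..<q}" "set_mset y \<subseteq> {..<q}" "size x = size y"
  shows "d1 q x y = real (size (x - y))"
proof -
  have "(\<Sum>i<q. \<bar>real (count x i) - real (count y i)\<bar>)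
      = (\<Sum>i<q. real (count (x - y) i) + real (count (y - x) i))"
    by (rule sum.cong) auto
  also have "\<dots> = real (\<Sum>i<q. count (x - y) i) + real (\<Sum>i<q. count (y - x) i)"
    by (simp add: sum.distrib)
  also have "(\<Sum>i<q. count (x - y) i) = size (x - y)"
    by (rule size_count[symmetric]) (use assms(1) in \<open>auto dest: in_diffD\<close>)
  also have "(\<Sum>i<q. count (y - x) i) = size (y - x)"
    by (rule size_count[symmetric]) (use assms(2) in \<open>auto dest: in_diffD\<close>)
  also have "size (y - x) = size (x - y)"
  proof -
    have a: "size (x - y) = size x - size (x \<inter># y)"
      using size_Diff_submset[of "x \<inter># y" x] diff_intersect_left_idem[of x y] by simp
    have b: "size (y - x) = size y - size (x \<inter># y)"
      using size_Diff_submset[of "x \<inter># y" y] diff_intersect_right_idem[of x y] by simp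
    show ?thesis using a b assms(3) by simp
  qed
  finally show ?thesis by (simp add: d1_def)
qed

theorem mainTheorem13:
  fixes b :: "nat \<Rightarrow> 'a::ab_group_add" and c :: 'a and q h n :: nat
  assumes "inj_on b {..<q}"
    and "Bh_set h q b"
    and "n \<ge> 1"
  shows "corrects_deletions h (code q n b c)
         \<and> (card (code q n b c) \<ge> 2 \<longrightarrow> d1_code q (code q n b c) > real h)"
proof (intro conjI impI)
  let ?C = "code q n b c"
  show cd: "corrects_deletions h ?C" using part1[OF assms(2)] .
  assume c2: "card ?C \<ge> 2"
  hence fin: "finite ?C" using card.infinite by fastforce
  obtain x y where xy: "x \<in> ?C" "y \<in> ?C" "x \<noteq> y"
  proof -
    have "\<not> card ?C \<le> 1" using c2 by simp
    then obtain x y where "x \<in> ?C" "y \<in> ?C" "x \<noteq> y"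
      using card_le_Suc0_iff_eq[OF fin] by auto
    thus ?thesis using that by blast
  qed
  let ?S = "{d1 q x y | x y. x \<in> ?C \<and> y \<in> ?C \<and> x \<noteq> y}"
  have Sfin: "finite ?S"
  proof -
    have "?S \<subseteq> (\<lambda>(x,y). d1 q x y) ` (?C \<times> ?C)" by auto
    thus ?thesis using fin finite_subset by blast
  qed
  have Sne: "?S \<noteq> {}" using xy by blast
  have all: "\<forall>d\<in>?S. d > real h"
  proof
    fix d assume "d \<in> ?S"
    then obtain x y where x: "x \<in> ?C" and y: "y \<in> ?C" and ne: "x \<noteq> y" and d: "d = d1 q x y" by blast
    have xs: "set_mset x \<subseteq> {..<q}" "size x = n"
      using x by (auto simp: code_def simplex_def)
    have ys: "set_mset y \<subseteq> {..<q}" "size y = n"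
      using y by (auto simp: code_def simplex_def)
    have e1: "size x - size (x \<inter># y) = size (x - y)"
      using size_Diff_submset[of "x \<inter># y" x] diff_intersect_left_idem[of x y] by simp
    have e2': "size y - size (x \<inter># y) = size (y - x)"
      using size_Diff_submset[of "x \<inter># y" y] diff_intersect_right_idem[of x y] by simp
    have e2: "size y - size (x \<inter># y) = size (x - y)"
      using e1 e2' xs ys by simp
    have "size (x - y) > h"
    proof (rule ccontr)
      assume "\<not> h < size (x - y)"
      hence "x \<inter># y \<in> del_outputs h x \<inter> del_outputs h y"
        using e1 e2 by (auto simp: del_outputs_def)
      thus False using cd x y ne unfolding corrects_deletions_def by blast
    qed
    thus "d > real h" using d d1_eq[OF xs(1) ys(1)] xs ys by simp
  qed
  show "d1_code q ?C > real h"
    unfolding d1_code_def using Sfin Sne all by simp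
qed

end
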